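(* Let $s\ge 1$ and let $a_1,\dots,a_k$ be pairwise coprime positive integers and $d_1,\dots,d_k$ positive integers with $k\le s$ and $a_i,d_i\le 2^s$, such that the minimal polynomial over $\mathbb{Q}$ of the positive real number $\sqrt[d_i]{a_i}$ is $x^{d_i}-a_i$ for each $i$. Let $d=\operatorname{lcm}(d_1,\dots,d_k)$, $\zeta_d=e^{2\pi i/d}$, $K=\mathbb{Q}(\sqrt[d_1]{a_1},\dots,\sqrt[d_k]{a_k},\zeta_d)$. Then there exist integers $c_0,c_1,\dots,c_k$ with $|c_i|\le 2^{4s^2}$ such that $$\theta=c_0\zeta_d+\sum_{i=1}^k c_i\sqrt[d_i]{a_i}$$ is a primitive element of $K$, i.e. $K=\mathbb{Q}(\theta)$, and $\deg\theta\le 2^{2s^2}$.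
   Context: $\deg\theta$ is the degree of the minimal polynomial of $\theta$ over $\mathbb{Q}$. *)

theory Defs
  imports Complex_Main "HOL-Computational_Algebra.Polynomial" "HOL-Computational_Algebra.Polynomial_Factorial"
begin

definition is_subfield :: "complex set \<Rightarrow> bool" where
  "is_subfield F \<longleftrightarrow> 0 \<in> F \<and> 1 \<in> F \<and>
     (\<forall>x\<in>F. \<forall>y\<in>F. x + y \<in> F \<and> x * y \<in> F) \<and>
     (\<forall>x\<in>F. - x \<in> F \<and> inverse x \<in> F)"

definition field_gen :: "complex set \<Rightarrow> complex set" where
  "field_gen S = \<Inter>{F. is_subfield F \<and> S \<subseteq> F}"

definition is_min_poly :: "rat poly \<Rightarrow> complex \<Rightarrow> bool" where
  "is_min_poly p x \<longleftrightarrow> p \<noteq> 0 \<and> lead_coeff p = 1 \<and> poly (map_poly of_rat p) x = 0 \<and>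
     (\<forall>q. q \<noteq> 0 \<and> poly (map_poly of_rat q) x = 0 \<longrightarrow> degree p \<le> degree q)"

end

theory Submission imports Defs "HOL-Computational_Algebra.Fundamental_Theorem_Algebra" "HOL-Library.FuncSet"
begin

lemma sf_0: "is_subfield F \<Longrightarrow> 0 \<in> F" by (simp add: is_subfield_def)
lemma sf_1: "is_subfield F \<Longrightarrow> 1 \<in> F" by (simp add: is_subfield_def)
lemma sf_add: "is_subfield F \<Longrightarrow> x \<in> F \<Longrightarrow> y \<in> F \<Longrightarrow> x + y \<in> F" by (simp add: is_subfield_def)
lemma sf_mult: "is_subfield F \<Longrightarrow> x \<in> F \<Longrightarrow> y \<in> F \<Longrightarrow> x * y \<in> F" by (simp add: is_subfield_def)
lemma sf_uminus: "is_subfield F \<Longrightarrow> x \<in> F \<Longrightarrow> - x \<in> F" by (simp add: is_subfield_def)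
lemma sf_inverse: "is_subfield F \<Longrightarrow> x \<in> F \<Longrightarrow> inverse x \<in> F" by (simp add: is_subfield_def)
lemma sf_diff: "is_subfield F \<Longrightarrow> x \<in> F \<Longrightarrow> y \<in> F \<Longrightarrow> x - y \<in> F"
  using sf_add[of F x "-y"] sf_uminus[of F y] by simp
lemma sf_divide: "is_subfield F \<Longrightarrow> x \<in> F \<Longrightarrow> y \<in> F \<Longrightarrow> x / y \<in> F"
  using sf_mult[of F x "inverse y"] sf_inverse[of F y] by (simp add: divide_inverse)
lemma sf_of_nat: "is_subfield F \<Longrightarrow> of_nat n \<in> F"
  by (induction n) (auto simp: sf_0 sf_1 sf_add)
lemma sf_of_int: "is_subfield F \<Longrightarrow> of_int n \<in> F"
  by (cases n rule: int_cases) (auto simp: sf_of_nat sf_uminus simp del: of_nat_Suc)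
lemma sf_of_rat: "is_subfield F \<Longrightarrow> of_rat r \<in> F"
proof -
  assume F: "is_subfield F"
  obtain a b where "quotient_of r = (a, b)" by (cases "quotient_of r")
  then have "r = of_int a / of_int b" by (simp add: quotient_of_div)
  then have "of_rat r = (of_int a / of_int b :: complex)" by (simp add: of_rat_divide)
  then show ?thesis using F by (simp add: sf_divide sf_of_int)
qed
lemma sf_sum: "is_subfield F \<Longrightarrow> (\<And>x. x \<in> A \<Longrightarrow> f x \<in> F) \<Longrightarrow> sum f A \<in> F"
  by (induction A rule: infinite_finite_induct) (auto simp: sf_0 sf_add)
lemma sf_prod: "is_subfield F \<Longrightarrow> (\<And>x. x \<in> A \<Longrightarrow> f x \<in> F) \<Longrightarrow> prod f A \<in> F"
  by (induction A rule: infinite_finite_induct) (auto simp: sf_1 sf_mult)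
lemma sf_power: "is_subfield F \<Longrightarrow> x \<in> F \<Longrightarrow> x ^ n \<in> F"
  by (induction n) (auto simp: sf_1 sf_mult)

lemma field_gen_sf: "is_subfield (field_gen S)"
  unfolding field_gen_def is_subfield_def by auto
lemma field_gen_sup: "S \<subseteq> field_gen S"
  unfolding field_gen_def by auto
lemma field_gen_min: "is_subfield F \<Longrightarrow> S \<subseteq> F \<Longrightarrow> field_gen S \<subseteq> F"
  unfolding field_gen_def by auto

definition Fpoly :: "complex set \<Rightarrow> complex poly \<Rightarrow> bool" where
  "Fpoly F p \<longleftrightarrow> (\<forall>i. coeff p i \<in> F)"

lemma Fpoly_add: "is_subfield F \<Longrightarrow> Fpoly F p \<Longrightarrow> Fpoly F q \<Longrightarrow> Fpoly F (p + q)"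
  by (simp add: Fpoly_def sf_add)
lemma Fpoly_diff: "is_subfield F \<Longrightarrow> Fpoly F p \<Longrightarrow> Fpoly F q \<Longrightarrow> Fpoly F (p - q)"
  by (simp add: Fpoly_def sf_diff)
lemma Fpoly_mult: "is_subfield F \<Longrightarrow> Fpoly F p \<Longrightarrow> Fpoly F q \<Longrightarrow> Fpoly F (p * q)"
  by (simp add: Fpoly_def coeff_mult sf_sum sf_mult)
lemma Fpoly_smult: "is_subfield F \<Longrightarrow> c \<in> F \<Longrightarrow> Fpoly F q \<Longrightarrow> Fpoly F (smult c q)"
  by (simp add: Fpoly_def sf_mult)
lemma Fpoly_monom: "is_subfield F \<Longrightarrow> c \<in> F \<Longrightarrow> Fpoly F (monom c n)"
  by (simp add: Fpoly_def sf_0)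
lemma Fpoly_const: "is_subfield F \<Longrightarrow> c \<in> F \<Longrightarrow> Fpoly F [:c:]"
  by (simp add: Fpoly_def coeff_pCons sf_0 split: nat.split)
lemma Fpoly_0: "is_subfield F \<Longrightarrow> Fpoly F 0"
  by (simp add: Fpoly_def sf_0)
lemma Fpoly_pCons: "Fpoly F (pCons a p) \<Longrightarrow> a \<in> F \<and> Fpoly F p"
  unfolding Fpoly_def by (metis coeff_pCons_0 coeff_pCons_Suc)
lemma Fpoly_pcompose: "is_subfield F \<Longrightarrow> Fpoly F p \<Longrightarrow> Fpoly F q \<Longrightarrow> Fpoly F (pcompose p q)"
proof (induction p rule: pCons_induct)
  case 0 then show ?case by (simp add: Fpoly_0)
next
  case (pCons a p)
  then show ?case by (simp add: pcompose_pCons Fpoly_pCons Fpoly_add Fpoly_const Fpoly_mult)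
qed
lemma Fpoly_rat: "is_subfield F \<Longrightarrow> Fpoly F (map_poly of_rat p)"
  by (simp add: Fpoly_def coeff_map_poly sf_of_rat)

lemma Fpoly_div:
  assumes F: "is_subfield F" and d: "Fpoly F d" "d \<noteq> 0"
  shows "Fpoly F p \<Longrightarrow> \<exists>q r. Fpoly F q \<and> Fpoly F r \<and> p = q * d + r \<and> (r = 0 \<or> degree r < degree d)"
proof (induction "degree p" arbitrary: p rule: less_induct)
  case less
  show ?case
  proof (cases "p = 0 \<or> degree p < degree d")
    case True
    then show ?thesis using less.prems F by (intro exI[of _ 0] exI[of _ p]) (auto simp: Fpoly_0)
  next
    case False
    define m where "m = degree p - degree d"
    define c where "c = lead_coeff p / lead_coeff d"
    define p' where "p' = p - monom c m * d"
    have c0: "c \<noteq> 0" using False d by (simp add: c_def)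
    have cF: "c \<in> F" unfolding c_def using less.prems d F by (simp add: Fpoly_def sf_divide)
    have degm: "degree (monom c m * d) = degree p"
      using c0 d False by (simp add: degree_mult_eq degree_monom_eq m_def)
    have "coeff (monom c m * d) (degree p) = c * lead_coeff d"
      using False by (simp add: coeff_monom_mult m_def)
    then have cp: "coeff p' (degree p) = 0" using d by (simp add: p'_def c_def)
    have dle: "degree p' \<le> degree p" unfolding p'_def using degm
      by (metis degree_diff_le le_refl)
    have p'F: "Fpoly F p'" unfolding p'_def
      using F less.prems d cF by (simp add: Fpoly_diff Fpoly_mult Fpoly_monom)
    show ?thesis
    proof (cases "p' = 0")
      case True
      then show ?thesis using F cF
        by (intro exI[of _ "monom c m"] exI[of _ 0]) (auto simp: Fpoly_0 Fpoly_monom p'_def)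
    next
      case False
      then have "degree p' < degree p" using cp dle
        by (metis le_neq_implies_less leading_coeff_0_iff)
      then obtain q1 r1 where qr: "Fpoly F q1" "Fpoly F r1" "p' = q1 * d + r1" "r1 = 0 \<or> degree r1 < degree d"
        using less.hyps p'F by blast
      have "p = (q1 + monom c m) * d + r1" using qr(3) by (simp add: p'_def algebra_simps)
      moreover have "Fpoly F (q1 + monom c m)" using qr F cF by (simp add: Fpoly_add Fpoly_monom)
      ultimately show ?thesis using qr by blast
    qed
  qed
qed

lemma prim_step:
  fixes \<gamma> \<beta> :: complex and f g :: "rat poly" and t :: int
  assumes f0: "f \<noteq> 0" and fg: "poly (map_poly of_rat f) \<gamma> = 0"
    and gb: "poly (map_poly of_rat g) \<beta> = 0"
    and gd: "poly (pderiv (map_poly of_rat g)) \<beta> \<noteq> 0"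
    and bad: "\<And>\<gamma>' \<beta>'. poly (map_poly of_rat f) \<gamma>' = 0 \<Longrightarrow> poly (map_poly of_rat g) \<beta>' = 0 \<Longrightarrow>
               \<beta>' \<noteq> \<beta> \<Longrightarrow> \<gamma> + of_int t * \<beta> \<noteq> \<gamma>' + of_int t * \<beta>'"
  shows "\<beta> \<in> field_gen {\<gamma> + of_int t * \<beta>}"
proof -
  define \<theta> where "\<theta> = \<gamma> + of_int t * \<beta>"
  define F where "F = field_gen {\<theta>}"
  have F: "is_subfield F" unfolding F_def by (rule field_gen_sf)
  have thF: "\<theta> \<in> F" unfolding F_def using field_gen_sup by blast
  define G where "G = map_poly (of_rat :: rat \<Rightarrow> complex) g"
  define f' where "f' = map_poly (of_rat :: rat \<Rightarrow> complex) f"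
  define H where "H = pcompose f' [:\<theta>, - of_int t:]"
  have polyH: "poly H x = poly f' (\<theta> - of_int t * x)" for x
    by (simp add: H_def poly_pcompose mult.commute)
  have GF: "Fpoly F G" unfolding G_def using F by (rule Fpoly_rat)
  have HF: "Fpoly F H" unfolding H_def f'_def
    using F thF by (intro Fpoly_pcompose Fpoly_rat) (auto simp: Fpoly_def coeff_pCons sf_0 sf_uminus sf_of_int split: nat.split)
  have G0: "G \<noteq> 0" using gd by (auto simp: G_def)
  define I where "I = {u * G + v * H | u v. Fpoly F u \<and> Fpoly F v}"
  have GI: "G \<in> I" unfolding I_def using F
    by (intro CollectI exI[of _ 1] exI[of _ 0]) (auto simp: Fpoly_def coeff_1 sf_0 sf_1)
  have HI: "H \<in> I" unfolding I_def using F
    by (intro CollectI exI[of _ 0] exI[of _ 1]) (auto simp: Fpoly_def coeff_1 sf_0 sf_1)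
  have IF: "X \<in> I \<Longrightarrow> Fpoly F X" for X
    unfolding I_def using F GF HF by (auto intro!: Fpoly_add Fpoly_mult)
  obtain p where p: "p \<in> I \<and> p \<noteq> 0" and pmin: "\<And>q. q \<in> I \<and> q \<noteq> 0 \<Longrightarrow> degree p \<le> degree q"
    using ex_has_least_nat[of "\<lambda>q. q \<in> I \<and> q \<noteq> 0" G degree] GI G0 by blast
  have pF: "Fpoly F p" using p IF by blast
  obtain u v where uv: "Fpoly F u" "Fpoly F v" "p = u * G + v * H" using p unfolding I_def by blast
  have dv: "p dvd X" if XI: "X \<in> I" for X
  proof -
    obtain u0 v0 where X: "Fpoly F u0" "Fpoly F v0" "X = u0 * G + v0 * H" using XI unfolding I_def by blast
    obtain q r where qr: "Fpoly F q" "Fpoly F r" "X = q * p + r" "r = 0 \<or> degree r < degree p"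
      using Fpoly_div[OF F pF] p IF XI by blast
    have "r = (u0 - q * u) * G + (v0 - q * v) * H" using qr(3) X(3) uv(3) by (simp add: algebra_simps)
    then have "r \<in> I" unfolding I_def using F X uv qr
      by (intro CollectI exI[of _ "u0 - q * u"] exI[of _ "v0 - q * v"]) (auto intro!: Fpoly_diff Fpoly_mult)
    then have "r = 0" using qr(4) pmin by force
    then show ?thesis using qr(3) by simp
  qed
  have pG: "p dvd G" using dv GI .
  have pH: "p dvd H" using dv HI .
  have Hb: "poly H \<beta> = 0" using fg by (simp add: polyH \<theta>_def f'_def)
  have pb: "poly p \<beta> = 0" using uv(3) Hb gb by (simp add: G_def)
  have roots: "poly p x = 0 \<Longrightarrow> x = \<beta>" for x
  proof (rule ccontr)
    assume px: "poly p x = 0" and nx: "x \<noteq> \<beta>"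
    have "poly G x = 0" using pG px by (metis dvd_def mult_eq_0_iff poly_mult)
    moreover have "poly H x = 0" using pH px by (metis dvd_def mult_eq_0_iff poly_mult)
    then have "poly f' (\<theta> - of_int t * x) = 0" by (simp add: polyH)
    ultimately show False using bad[of "\<theta> - of_int t * x" x] nx by (simp add: G_def f'_def \<theta>_def)
  qed
  have "pderiv G \<noteq> 0" using gd by (auto simp: G_def)
  have oG: "order \<beta> G = 1"
    using order_pderiv[OF G0, of \<beta>] gb gd order_root[of "pderiv G" \<beta>] by (simp add: G_def)
  have op: "order \<beta> p \<le> 1" using dvd_imp_order_le[OF G0 pG, of \<beta>] oG by simp
  obtain q where q: "p = [:- \<beta>, 1:] ^ order \<beta> p * q" "\<not> [:- \<beta>, 1:] dvd q"
    using order_decomp[of p \<beta>] p by blast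
  have "\<not> (\<exists>z. poly q z = 0)"
  proof
    assume "\<exists>z. poly q z = 0"
    then obtain z where z: "poly q z = 0" by blast
    then have "poly p z = 0" by (subst q(1)) simp
    then have "z = \<beta>" by (rule roots)
    then show False using z q(2) poly_eq_0_iff_dvd by blast
  qed
  then have "constant (poly q)" using fundamental_theorem_of_algebra by blast
  then have dq: "degree q = 0" by (simp add: constant_degree)
  have q0: "q \<noteq> 0" using p q by auto
  have "order \<beta> p \<noteq> 0" using pb p order_root by blast
  then have o1: "order \<beta> p = 1" using op by simp
  have "degree ([:- \<beta>, 1:] ^ order \<beta> p * q) = degree ([:- \<beta>, 1:] ^ order \<beta> p) + degree q"
    using q0 by (intro degree_mult_eq) auto
  then have "degree p = degree ([:- \<beta>, 1:] ^ order \<beta> p) + degree q" using q(1) by simp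
  then have degp: "degree p = 1" using o1 dq by (simp only: degree_linear_power)
  have c1: "coeff p 1 \<noteq> 0" using degp by (metis leading_coeff_0_iff one_neq_zero degree_0)
  have "poly p \<beta> = coeff p 0 + coeff p 1 * \<beta>"
    using degp by (simp add: poly_altdef)
  then have "\<beta> = - coeff p 0 / coeff p 1" using pb c1 by (simp add: field_simps add_eq_0_iff)
  moreover have "coeff p 0 \<in> F" "coeff p 1 \<in> F" using pF by (auto simp: Fpoly_def)
  ultimately have "\<beta> \<in> F" using F by (simp add: sf_divide sf_uminus)
  then show ?thesis by (simp add: F_def \<theta>_def)
qed

interpretation QV: vector_space "\<lambda>(r::rat) (x::complex). of_rat r * x"
  by unfold_locales (auto simp: algebra_simps of_rat_add of_rat_mult)

lemma map_poly_sum_monom: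
  "map_poly (of_rat :: rat \<Rightarrow> complex) (\<Sum>i\<le>N. monom (w i) i) = (\<Sum>i\<le>N. monom (of_rat (w i)) i)"
  by (rule poly_eqI) (simp add: coeff_map_poly coeff_sum coeff_monom)

lemma alg_bound:
  fixes x :: complex
  assumes B: "finite B" and pw: "\<And>n. x ^ n \<in> QV.span B"
  shows "\<exists>q :: rat poly. q \<noteq> 0 \<and> poly (map_poly of_rat q) x = 0 \<and> degree q \<le> card B"
proof (cases "inj_on (\<lambda>n. x ^ n) {..card B}")
  case False
  then obtain i j where ij: "i \<le> card B" "j \<le> card B" "i \<noteq> j" "x ^ i = x ^ j"
    unfolding inj_on_def by auto
  have "map_poly (of_rat :: rat \<Rightarrow> complex) (monom 1 j - monom 1 i) = monom 1 j - monom 1 i"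
    by (rule poly_eqI) (simp add: coeff_map_poly of_rat_diff coeff_monom)
  then show ?thesis
    apply (intro exI[of _ "monom 1 j - monom 1 i"])
    using ij by (auto simp: poly_monom degree_monom_eq intro: order.trans[OF degree_diff_le_max] dest: arg_cong[where f="\<lambda>p. coeff p j"])
next
  case True
  define P where "P = (\<lambda>n. x ^ n) ` {..card B}"
  have cP: "card P = Suc (card B)" unfolding P_def using True by (simp add: card_image)
  have "P \<subseteq> QV.span B" unfolding P_def using pw by auto
  then have "QV.dependent P" using QV.independent_span_bound[OF B, of P] cP by auto
  then obtain t u where tu: "finite t" "t \<subseteq> P" "(\<Sum>v\<in>t. of_rat (u v) * v) = 0" "\<exists>v\<in>t. u v \<noteq> 0"
    unfolding QV.dependent_explicit by blast
  define w where "w n = (if x ^ n \<in> t then u (x ^ n) else 0)" for n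
  define q where "q = (\<Sum>i\<le>card B. monom (w i) i)"
  have cq: "coeff q n = (if n \<le> card B then w n else 0)" for n
    by (simp add: q_def coeff_sum coeff_monom)
  define A where "A = {n \<in> {..card B}. x ^ n \<in> t}"
  have tA: "t = (\<lambda>n. x ^ n) ` A" using tu(2) unfolding A_def P_def by auto
  have injA: "inj_on (\<lambda>n. x ^ n) A" using True by (rule inj_on_subset) (auto simp: A_def)
  have "poly (map_poly of_rat q) x = (\<Sum>i\<le>card B. of_rat (w i) * x ^ i)"
    by (simp add: q_def map_poly_sum_monom poly_sum poly_monom)
  also have "\<dots> = (\<Sum>i\<in>A. of_rat (u (x ^ i)) * x ^ i)"
    by (rule sum.mono_neutral_cong_right) (auto simp: A_def w_def)
  also have "\<dots> = (\<Sum>v\<in>t. of_rat (u v) * v)"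
    unfolding tA by (subst sum.reindex[OF injA]) simp
  also have "\<dots> = 0" by (rule tu(3))
  finally have z: "poly (map_poly of_rat q) x = 0" .
  obtain v where v: "v \<in> t" "u v \<noteq> 0" using tu(4) by blast
  then obtain n where n: "n \<in> A" "v = x ^ n" using tA by auto
  have "coeff q n \<noteq> 0" using n v by (simp add: cq w_def A_def)
  then have "q \<noteq> 0" by auto
  moreover have "degree q \<le> card B" by (rule degree_le) (simp add: cq)
  ultimately show ?thesis using z by blast
qed

lemma min_poly_exists:
  assumes "q \<noteq> 0" "poly (map_poly of_rat q) x = 0" "degree q \<le> N"
  shows "\<exists>p. is_min_poly p x \<and> degree p \<le> N"
proof -
  obtain q0 where q0: "q0 \<noteq> 0 \<and> poly (map_poly of_rat q0) x = 0"
    and m: "\<And>r. r \<noteq> 0 \<and> poly (map_poly of_rat r) x = 0 \<Longrightarrow> degree q0 \<le> degree r"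
    using ex_has_least_nat[of "\<lambda>r. r \<noteq> 0 \<and> poly (map_poly (of_rat :: rat \<Rightarrow> complex) r) x = 0" q degree] assms
    by blast
  define p where "p = smult (inverse (lead_coeff q0)) q0"
  have "p \<noteq> 0" "lead_coeff p = 1" using q0 by (auto simp: p_def)
  moreover have "poly (map_poly of_rat p) x = 0" using q0
  proof -
    have "map_poly (of_rat :: rat \<Rightarrow> complex) p = smult (of_rat (inverse (lead_coeff q0))) (map_poly of_rat q0)"
      by (rule poly_eqI) (simp add: p_def coeff_map_poly of_rat_mult)
    then show ?thesis using q0 by simp
  qed
  moreover have "degree p = degree q0" using q0 by (simp add: p_def)
  ultimately show ?thesis unfolding is_min_poly_def using m assms
    by (intro exI[of _ p]) (metis order.trans)
qed

lemma span_mult_closed: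
  fixes M :: "complex set"
  assumes mc: "\<And>x y. x \<in> M \<Longrightarrow> y \<in> M \<Longrightarrow> x * y \<in> M"
    and x: "x \<in> QV.span M" and y: "y \<in> QV.span M"
  shows "x * y \<in> QV.span M"
proof -
  have my: "m * y \<in> QV.span M" if m: "m \<in> M" for m
    using y
  proof (induction rule: QV.span_induct_alt)
    case base then show ?case by (simp add: QV.span_zero)
  next
    case (step c z w)
    have "m * (of_rat c * z + w) = of_rat c * (m * z) + m * w" by (simp add: algebra_simps)
    moreover have "m * z \<in> QV.span M" using mc[OF m step(1)] by (rule QV.span_base)
    ultimately show ?case using step(2) by (simp add: QV.span_add QV.span_scale)
  qed
  show ?thesis using x
  proof (induction rule: QV.span_induct_alt)
    case base then show ?case by (simp add: QV.span_zero)
  next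
    case (step c z w)
    have "(of_rat c * z + w) * y = of_rat c * (z * y) + w * y" by (simp add: algebra_simps)
    then show ?case using step my by (simp add: QV.span_add QV.span_scale)
  qed
qed

lemma span_power:
  fixes M :: "complex set"
  assumes mc: "\<And>x y. x \<in> M \<Longrightarrow> y \<in> M \<Longrightarrow> x * y \<in> M" and one: "1 \<in> M"
    and x: "x \<in> QV.span M"
  shows "x ^ n \<in> QV.span M"
  by (induction n) (auto simp: QV.span_base one span_mult_closed[OF mc x])

lemma span_setup:
  fixes \<zeta> :: complex and \<alpha> :: "nat \<Rightarrow> complex" and d a :: "nat \<Rightarrow> nat" and D k :: nat
  assumes D: "D > 0" "\<zeta> ^ D = 1" and al: "\<And>i. i \<in> {1..k} \<Longrightarrow> d i > 0 \<and> \<alpha> i ^ d i = of_nat (a i)"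
  shows "{\<zeta> ^ j * (\<Prod>i\<in>{1..k}. \<alpha> i ^ e i) | j e. True} \<subseteq>
     QV.span ((\<lambda>(j,e). \<zeta> ^ j * (\<Prod>i\<in>{1..k}. \<alpha> i ^ e i)) ` ({..<D} \<times> PiE {1..k} (\<lambda>i. {..<d i})))"
    (is "_ \<subseteq> QV.span ?B")
proof
  fix m assume "m \<in> {\<zeta> ^ j * (\<Prod>i\<in>{1..k}. \<alpha> i ^ e i) | j e. True}"
  then obtain j e where m: "m = \<zeta> ^ j * (\<Prod>i\<in>{1..k}. \<alpha> i ^ e i)" by blast
  define e' where "e' = restrict (\<lambda>i. e i mod d i) {1..k}"
  have e'P: "e' \<in> PiE {1..k} (\<lambda>i. {..<d i})" using al by (auto simp: e'_def)
  have zj: "\<zeta> ^ j = \<zeta> ^ (j mod D)"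
  proof -
    have "\<zeta> ^ j = \<zeta> ^ (D * (j div D) + j mod D)" by simp
    also have "\<dots> = \<zeta> ^ (j mod D)" by (simp only: power_add power_mult D(2)) simp
    finally show ?thesis .
  qed
  have ai: "\<alpha> i ^ e i = of_nat (a i ^ (e i div d i)) * \<alpha> i ^ e' i" if i: "i \<in> {1..k}" for i
  proof -
    have "\<alpha> i ^ e i = \<alpha> i ^ (d i * (e i div d i) + e i mod d i)" by simp
    also have "\<dots> = (\<alpha> i ^ d i) ^ (e i div d i) * \<alpha> i ^ (e i mod d i)" by (simp only: power_add power_mult)
    also have "\<dots> = of_nat (a i ^ (e i div d i)) * \<alpha> i ^ e' i" using al[OF i] i by (simp add: e'_def)
    finally show ?thesis .
  qed
  have "m = of_rat (of_nat (\<Prod>i\<in>{1..k}. a i ^ (e i div d i))) * (\<zeta> ^ (j mod D) * (\<Prod>i\<in>{1..k}. \<alpha> i ^ e' i))"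
    unfolding m zj by (simp only: of_rat_of_nat_eq) (simp add: ai prod.distrib)
  moreover have "\<zeta> ^ (j mod D) * (\<Prod>i\<in>{1..k}. \<alpha> i ^ e' i) \<in> ?B"
    using e'P D(1) by (intro image_eqI[of _ _ "(j mod D, e')"]) auto
  ultimately show "m \<in> QV.span ?B" by (simp add: QV.span_base QV.span_scale)
qed

lemma choose_t:
  fixes Bad :: "complex set"
  assumes "finite Bad" "card Bad \<le> M"
  shows "\<exists>t::nat. t \<le> M \<and> of_nat t \<notin> Bad"
proof (rule ccontr)
  assume "\<not> ?thesis"
  then have "of_nat ` {..M} \<subseteq> Bad" by auto
  then have "card (of_nat ` {..M} :: complex set) \<le> card Bad" using assms(1) by (rule card_mono[rotated])
  moreover have "card (of_nat ` {..M} :: complex set) = Suc M"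
    by (subst card_image) (auto simp: inj_on_def)
  ultimately show False using assms(2) by simp
qed

lemma step_lemma:
  fixes \<gamma> \<beta> :: complex and f :: "rat poly" and dd aa Mb :: nat
  assumes f0: "f \<noteq> 0" and fg: "poly (map_poly of_rat f) \<gamma> = 0" and Mb: "degree f * dd \<le> Mb"
    and dd: "dd > 0" and aa: "aa > 0" and b: "\<beta> = complex_of_real (root dd (real aa))"
  shows "\<exists>t::nat. t \<le> Mb \<and> \<beta> \<in> field_gen {\<gamma> + of_int (int t) * \<beta>}"
proof -
  define g :: "rat poly" where "g = monom 1 dd - [:of_nat aa:]"
  define G where "G = (monom 1 dd - [:of_nat aa:] :: complex poly)"
  have gG: "map_poly of_rat g = G"
    by (rule poly_eqI) (simp add: g_def G_def coeff_map_poly of_rat_diff coeff_monom coeff_pCons split: nat.split)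
  have rpos: "root dd (real aa) > 0" using dd aa by (simp add: real_root_gt_zero)
  have b0: "\<beta> \<noteq> 0" using rpos b by simp
  have "\<beta> ^ dd = of_nat aa" using b dd by (simp flip: of_real_power)
  then have gb: "poly (map_poly of_rat g) \<beta> = 0" by (simp add: gG G_def poly_monom)
  have "pderiv G = monom (of_nat dd) (dd - 1)" by (simp add: G_def pderiv_diff pderiv_monom pderiv_pCons)
  then have gd: "poly (pderiv (map_poly of_rat g)) \<beta> \<noteq> 0" using b0 dd by (simp add: gG poly_monom)
  have G0: "G \<noteq> 0" using gb gd by (metis gG pderiv_0 poly_0)
  have degG: "degree G \<le> dd" unfolding G_def
    by (rule order.trans[OF degree_diff_le_max]) (simp add: degree_monom_le)
  define f' where "f' = map_poly (of_rat :: rat \<Rightarrow> complex) f"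
  have f'0: "f' \<noteq> 0" using f0 by (simp add: f'_def poly_eq_iff coeff_map_poly)
  define Rf where "Rf = {z. poly f' z = 0}"
  define Rg where "Rg = {z. poly G z = 0}"
  define Bad where "Bad = (\<lambda>(g', b'). (g' - \<gamma>) / (\<beta> - b')) ` (Rf \<times> Rg)"
  have fin: "finite Rf" "finite Rg" using f'0 G0 by (auto simp: Rf_def Rg_def poly_roots_finite)
  have "card Rf \<le> degree f" using card_poly_roots_bound[OF f'0] by (simp add: Rf_def f'_def degree_map_poly)
  moreover have "card Rg \<le> dd" using card_poly_roots_bound[OF G0] degG by (simp add: Rg_def)
  ultimately have "card Rf * card Rg \<le> degree f * dd" by (rule mult_le_mono)
  then have cB: "card Bad \<le> Mb" unfolding Bad_def using Mb
    using card_image_le[OF finite_cartesian_product[OF fin], of "\<lambda>(g', b'). (g' - \<gamma>) / (\<beta> - b')"]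
    by (simp add: card_cartesian_product)
  have finB: "finite Bad" unfolding Bad_def using fin by simp
  obtain t where t: "t \<le> Mb" "of_nat t \<notin> Bad" using choose_t[OF finB cB] by blast
  have "\<beta> \<in> field_gen {\<gamma> + of_int (int t) * \<beta>}"
  proof (rule prim_step[OF f0 fg gb gd])
    fix \<gamma>' \<beta>' :: complex assume h: "poly (map_poly of_rat f) \<gamma>' = 0" "poly (map_poly of_rat g) \<beta>' = 0" "\<beta>' \<noteq> \<beta>"
    show "\<gamma> + of_int (int t) * \<beta> \<noteq> \<gamma>' + of_int (int t) * \<beta>'"
    proof
      assume e: "\<gamma> + of_int (int t) * \<beta> = \<gamma>' + of_int (int t) * \<beta>'"
      have "\<beta> - \<beta>' \<noteq> 0" using h(3) by simp
      then have "of_nat t = (\<gamma>' - \<gamma>) / (\<beta> - \<beta>')" using e by (simp add: field_simps)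
      moreover have "(\<gamma>', \<beta>') \<in> Rf \<times> Rg" using h by (simp add: Rf_def Rg_def f'_def gG)
      ultimately have "of_nat t \<in> Bad" unfolding Bad_def by force
      then show False using t(2) by simp
    qed
  qed
  then show ?thesis using t(1) by blast
qed

theorem mainTheorem6:
  fixes s k :: nat and a d :: "nat \<Rightarrow> nat"
  assumes "s \<ge> 1" and "k \<le> s"
    and "\<And>i. i \<in> {1..k} \<Longrightarrow> a i > 0 \<and> d i > 0 \<and> a i \<le> 2 ^ s \<and> d i \<le> 2 ^ s"
    and "\<And>i j. i \<in> {1..k} \<Longrightarrow> j \<in> {1..k} \<Longrightarrow> i \<noteq> j \<Longrightarrow> coprime (a i) (a j)"
    and "\<And>i. i \<in> {1..k} \<Longrightarrow>
           is_min_poly (monom 1 (d i) - [:of_nat (a i):]) (complex_of_real (root (d i) (real (a i))))"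
  shows "\<exists>c :: nat \<Rightarrow> int. (\<forall>i \<in> {0..k}. \<bar>c i\<bar> \<le> 2 ^ (4 * s\<^sup>2)) \<and>
           (let D = Lcm (d ` {1..k});
                \<zeta> = exp (2 * of_real pi * \<i> / of_nat D);
                K = field_gen ({complex_of_real (root (d i) (real (a i))) | i. i \<in> {1..k}} \<union> {\<zeta>});
                \<theta> = of_int (c 0) * \<zeta> + (\<Sum>i=1..k. of_int (c i) * complex_of_real (root (d i) (real (a i))))
            in K = field_gen {\<theta>} \<and> (\<exists>p. is_min_poly p \<theta> \<and> degree p \<le> 2 ^ (2 * s\<^sup>2)))"
proof -
  define D where "D = Lcm (d ` {1..k})"
  define \<zeta> where "\<zeta> = exp (2 * of_real pi * \<i> / of_nat D)"
  define \<alpha> where "\<alpha> i = complex_of_real (root (d i) (real (a i)))" for i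
  have dpos: "d i > 0" "a i > 0" "d i \<le> 2 ^ s" if "i \<in> {1..k}" for i using assms(3)[OF that] by auto
  have "0 \<notin> d ` {1..k}" using dpos by force
  moreover have "finite (d ` {1..k})" by simp
  ultimately have "Lcm (d ` {1..k}) \<noteq> 0" using Lcm_0_iff[of "d ` {1..k}"] by blast
  then have D0: "D > 0" unfolding D_def by (simp only: neq0_conv)
  have zD: "\<zeta> ^ D = 1"
  proof -
    have e: "of_nat D * (2 * of_real pi * \<i> / of_nat D) = 2 * of_real pi * \<i>" using D0 by simp
    have "\<zeta> ^ D = exp (of_nat D * (2 * of_real pi * \<i> / of_nat D))" unfolding \<zeta>_def by (rule exp_of_nat_mult[symmetric])
    also have "\<dots> = exp (2 * of_real pi * \<i>)" by (subst e) (rule refl)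
    finally show ?thesis by simp
  qed
  have al: "d i > 0 \<and> \<alpha> i ^ d i = of_nat (a i)" if "i \<in> {1..k}" for i
    using dpos[OF that] by (simp add: \<alpha>_def flip: of_real_power)
  define M where "M = {\<zeta> ^ j * (\<Prod>i\<in>{1..k}. \<alpha> i ^ e i) | j e. True}"
  define B where "B = (\<lambda>(j,e). \<zeta> ^ j * (\<Prod>i\<in>{1..k}. \<alpha> i ^ e i)) ` ({..<D} \<times> PiE {1..k} (\<lambda>i. {..<d i}))"
  have MB: "M \<subseteq> QV.span B" unfolding M_def B_def by (rule span_setup[OF D0 zD]) (rule al)
  have spMB: "QV.span M \<subseteq> QV.span B" using QV.span_minimal[OF MB QV.subspace_span] .
  have finB: "finite B" unfolding B_def by (auto intro!: finite_PiE)
  define P where "P = (\<Prod>i\<in>{1..k}. d i)"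
  have P: "P \<le> 2 ^ (s\<^sup>2)"
  proof -
    have "P \<le> (2 ^ s) ^ s" unfolding P_def using dpos assms(2) by (intro prod_le_power) auto
    then show ?thesis by (simp add: power2_eq_square power_mult)
  qed
  have DP: "D \<le> P"
  proof -
    have "D dvd P" unfolding D_def P_def by (rule Lcm_least) auto
    moreover have "P > 0" unfolding P_def using dpos by (simp add: prod_pos)
    ultimately show ?thesis by (simp add: dvd_imp_le)
  qed
  have cardB: "card B \<le> 2 ^ (2 * s\<^sup>2)"
  proof -
    have "card B \<le> card ({..<D} \<times> PiE {1..k} (\<lambda>i. {..<d i}))" unfolding B_def
      by (rule card_image_le) (auto intro!: finite_PiE)
    also have "\<dots> = D * P" by (simp add: card_cartesian_product card_PiE P_def)
    also have "\<dots> \<le> 2 ^ (s\<^sup>2) * 2 ^ (s\<^sup>2)" using DP P by (intro mult_le_mono) auto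
    also have "\<dots> = 2 ^ (2 * s\<^sup>2)" by (simp flip: power_add)
    finally show ?thesis .
  qed
  have mc: "x * y \<in> M" if xyM: "x \<in> M" "y \<in> M" for x y
  proof -
    obtain j e where x: "x = \<zeta> ^ j * (\<Prod>i\<in>{1..k}. \<alpha> i ^ e i)" using xyM(1) unfolding M_def by blast
    obtain j' e' where y: "y = \<zeta> ^ j' * (\<Prod>i\<in>{1..k}. \<alpha> i ^ e' i)" using xyM(2) unfolding M_def by blast
    have "x * y = \<zeta> ^ (j + j') * (\<Prod>i\<in>{1..k}. \<alpha> i ^ (e i + e' i))"
      unfolding x y by (simp add: power_add prod.distrib algebra_simps)
    then show ?thesis unfolding M_def by (intro CollectI exI[of _ "j + j'"] exI[of _ "\<lambda>i. e i + e' i"]) simp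
  qed
  have one: "1 \<in> M" unfolding M_def by (intro CollectI exI[of _ 0] exI[of _ "\<lambda>_. 0"]) simp
  have zM: "\<zeta> \<in> M" unfolding M_def by (intro CollectI exI[of _ 1] exI[of _ "\<lambda>_. 0"]) simp
  have aM: "\<alpha> i \<in> M" if i: "i \<in> {1..k}" for i
  proof -
    have "(\<Prod>l\<in>{1..k}. \<alpha> l ^ (if l = i then 1 else 0)) = (\<Prod>l\<in>{1..k}. if l = i then \<alpha> l else 1)"
      by (rule prod.cong) auto
    also have "\<dots> = \<alpha> i" using i by simp
    finally show ?thesis unfolding M_def
      by (intro CollectI exI[of _ 0] exI[of _ "\<lambda>l. if l = i then 1 else 0"]) simp
  qed
  define \<theta>c where "\<theta>c c j = of_int (c 0) * \<zeta> + (\<Sum>i=1..j. of_int (c i) * \<alpha> i)" for c :: "nat \<Rightarrow> int" and j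
  have ofi: "of_int x * y = of_rat (of_int x) * y" for x :: int and y :: complex by simp
  have thspan: "\<theta>c c j \<in> QV.span M" if "j \<le> k" for c j
    unfolding \<theta>c_def ofi using that zM aM
    by (intro QV.span_add QV.span_sum QV.span_scale QV.span_base) auto
  have thpoly: "\<exists>q. q \<noteq> 0 \<and> poly (map_poly of_rat q) (\<theta>c c j) = 0 \<and> degree q \<le> 2 ^ (2 * s\<^sup>2)" if "j \<le> k" for c j
  proof -
    have "(\<theta>c c j) ^ n \<in> QV.span B" for n using span_power[OF mc one thspan[OF that]] spMB by blast
    then obtain q where "q \<noteq> 0 \<and> poly (map_poly of_rat q) (\<theta>c c j) = 0 \<and> degree q \<le> card B"
      using alg_bound[OF finB] by blast
    then show ?thesis using cardB by (meson order.trans)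
  qed
  have sle: "2 * s\<^sup>2 + s \<le> 4 * s\<^sup>2" using le_square[of s] by (simp add: power2_eq_square)
  have claim: "j \<le> k \<longrightarrow> (\<exists>c. c 0 = 1 \<and> (\<forall>i. \<bar>c i\<bar> \<le> 2 ^ (4 * s\<^sup>2)) \<and> \<zeta> \<in> field_gen {\<theta>c c j} \<and>
      (\<forall>i\<in>{1..j}. \<alpha> i \<in> field_gen {\<theta>c c j}))" for j
  proof (induction j)
    case 0
    show ?case
      by (intro impI exI[of _ "\<lambda>i. if i = 0 then 1 else 0"]) (use field_gen_sup[of "{\<zeta>}"] in \<open>auto simp: \<theta>c_def\<close>)
  next
    case (Suc j)
    show ?case
    proof
      assume jk: "Suc j \<le> k"
      then obtain c where c: "c 0 = 1" "\<forall>i. \<bar>c i\<bar> \<le> 2 ^ (4 * s\<^sup>2)" "\<zeta> \<in> field_gen {\<theta>c c j}"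
        "\<forall>i\<in>{1..j}. \<alpha> i \<in> field_gen {\<theta>c c j}" using Suc by auto
      obtain f where f: "f \<noteq> 0" "poly (map_poly of_rat f) (\<theta>c c j) = 0" "degree f \<le> 2 ^ (2 * s\<^sup>2)"
        using thpoly[of j c] jk by auto
      have sj: "Suc j \<in> {1..k}" using jk by simp
      have "degree f * d (Suc j) \<le> 2 ^ (2 * s\<^sup>2) * 2 ^ s" using f(3) dpos[OF sj] by (intro mult_le_mono)
      also have "\<dots> \<le> 2 ^ (4 * s\<^sup>2)" using sle by (simp flip: power_add)
      finally have Mb: "degree f * d (Suc j) \<le> 2 ^ (4 * s\<^sup>2)" .
      obtain t :: nat where t: "t \<le> 2 ^ (4 * s\<^sup>2)" "\<alpha> (Suc j) \<in> field_gen {\<theta>c c j + of_int (int t) * \<alpha> (Suc j)}"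
        using step_lemma[OF f(1,2) Mb dpos(1)[OF sj] dpos(2)[OF sj] \<alpha>_def] by blast
      define c' where "c' = c(Suc j := int t)"
      have th': "\<theta>c c' (Suc j) = \<theta>c c j + of_int (int t) * \<alpha> (Suc j)"
        unfolding \<theta>c_def c'_def by (simp add: sum.cl_ivl_Suc)
      define F where "F = field_gen {\<theta>c c' (Suc j)}"
      have F: "is_subfield F" unfolding F_def by (rule field_gen_sf)
      have aF: "\<alpha> (Suc j) \<in> F" using t(2) th' by (simp add: F_def)
      have "\<theta>c c' (Suc j) \<in> F" unfolding F_def using field_gen_sup by blast
      moreover have "\<theta>c c j = \<theta>c c' (Suc j) - of_int (int t) * \<alpha> (Suc j)" using th' by simp
      ultimately have "\<theta>c c j \<in> F" using aF F by (simp add: sf_diff sf_mult sf_of_nat)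
      then have sub: "field_gen {\<theta>c c j} \<subseteq> F" using F field_gen_min by blast
      have tb: "\<bar>int t\<bar> \<le> 2 ^ (4 * s\<^sup>2)"
      proof -
        have "int t \<le> int (2 ^ (4 * s\<^sup>2))" using t(1) by (simp only: of_nat_le_iff)
        then show ?thesis by simp
      qed
      have c'1: "c' 0 = 1" using c(1) by (simp add: c'_def)
      have c'2: "\<forall>i. \<bar>c' i\<bar> \<le> 2 ^ (4 * s\<^sup>2)" unfolding c'_def using c(2) tb by simp
      have z: "\<zeta> \<in> F" using c(3) sub by blast
      have al: "\<forall>i\<in>{1..Suc j}. \<alpha> i \<in> F" using c(4) sub aF by (auto simp: le_Suc_eq)
      show "\<exists>c. c 0 = 1 \<and> (\<forall>i. \<bar>c i\<bar> \<le> 2 ^ (4 * s\<^sup>2)) \<and> \<zeta> \<in> field_gen {\<theta>c c (Suc j)} \<and>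
        (\<forall>i\<in>{1..Suc j}. \<alpha> i \<in> field_gen {\<theta>c c (Suc j)})"
        using c'1 c'2 z al unfolding F_def by blast
    qed
  qed
  obtain c where c: "c 0 = 1" "\<forall>i. \<bar>c i\<bar> \<le> 2 ^ (4 * s\<^sup>2)" "\<zeta> \<in> field_gen {\<theta>c c k}"
    "\<forall>i\<in>{1..k}. \<alpha> i \<in> field_gen {\<theta>c c k}" using claim[of k] by auto
  define K where "K = field_gen ({\<alpha> i | i. i \<in> {1..k}} \<union> {\<zeta>})"
  have K: "is_subfield K" unfolding K_def by (rule field_gen_sf)
  have sK: "{\<alpha> i | i. i \<in> {1..k}} \<union> {\<zeta>} \<subseteq> K" unfolding K_def by (rule field_gen_sup)
  have gK: "\<zeta> \<in> K" "\<And>i. i \<in> {1..k} \<Longrightarrow> \<alpha> i \<in> K" using sK by auto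
  have "\<theta>c c k \<in> K" unfolding \<theta>c_def using K gK
    by (intro sf_add sf_sum sf_mult sf_of_int) auto
  then have K1: "field_gen {\<theta>c c k} \<subseteq> K" using K field_gen_min by blast
  have "{\<alpha> i | i. i \<in> {1..k}} \<union> {\<zeta>} \<subseteq> field_gen {\<theta>c c k}" using c(3,4) by auto
  then have K2: "K \<subseteq> field_gen {\<theta>c c k}" unfolding K_def by (rule field_gen_min[OF field_gen_sf])
  have KK: "K = field_gen {\<theta>c c k}" using K1 K2 by blast
  obtain q where "q \<noteq> 0" "poly (map_poly of_rat q) (\<theta>c c k) = 0" "degree q \<le> 2 ^ (2 * s\<^sup>2)"
    using thpoly[of k c] by auto
  then obtain p where p: "is_min_poly p (\<theta>c c k)" "degree p \<le> 2 ^ (2 * s\<^sup>2)" using min_poly_exists by blast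
  have bnd: "\<forall>i\<in>{0..k}. \<bar>c i\<bar> \<le> 2 ^ (4 * s\<^sup>2)" using c(2) by blast
  show ?thesis
    unfolding Let_def D_def[symmetric] \<zeta>_def[symmetric] \<alpha>_def[symmetric] \<theta>c_def[symmetric] K_def[symmetric]
    using bnd KK p by blast
qed

end
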